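(* Let $Z(t),t\in\mathbb{Z}^d$, be a BRs rf with $P(\sup_tZ(t)>0)=1$ and $E[Z(t)]=1$ for all $t$, and let $\Theta$ be defined by $P(\Theta\in A)=E[Z(0)\mathbf 1(Z/Z(0)\in A)]$. If $F:E\to[0,\infty]$ is a shift-invariant and 0-homogeneous measurable map, then $E[F(Z)]=0$ if and only if $E[F(\Theta)]=0$. If in addition $F\le1$, then $E[F(Z)]=1$ if and only if $E[F(\Theta)]=1$.
   Context: $E=[0,\infty)^{\mathbb{Z}^d}$ with product $\sigma$-field; shift $(B^hf)(t)=f(t-h)$; $F$ is 0-homogeneous if $F(cf)=F(f)$ for all $c>0$, and shift-invariant if $F(B^hf)=F(f)$ for all $h$. A non-negative rf $Z$ on $\mathbb{Z}^d$ with finite positive means is Brown–Resnick stationary (BRs) if $E[Z(h)G(Z)]=E[Z(0)G(B^hZ)]$ for all $h\in\mathbb{Z}^d$ and all 0-homogeneous measurable $G:E\to[0,\infty]$; equivalently, it is the spectral rf of a stationary max-stable rf. *)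

theory Defs
  imports "HOL-Probability.Probability"
begin

definition Efield :: "('i \<Rightarrow> real) measure" where
  "Efield = Pi\<^sub>M UNIV (\<lambda>_. restrict_space borel {0..})"

definition shift :: "'i::minus \<Rightarrow> ('i \<Rightarrow> 'b) \<Rightarrow> 'i \<Rightarrow> 'b" where
  "shift h f = (\<lambda>t. f (t - h))"

definition zero_homogeneous :: "(('i \<Rightarrow> real) \<Rightarrow> 'b) \<Rightarrow> bool" where
  "zero_homogeneous F \<longleftrightarrow>
     (\<forall>c::real. c > 0 \<longrightarrow> (\<forall>f \<in> space Efield. F (\<lambda>t. c * f t) = F f))"

definition shift_invariant :: "(('i::minus \<Rightarrow> real) \<Rightarrow> 'b) \<Rightarrow> bool" where
  "shift_invariant F \<longleftrightarrow> (\<forall>h. \<forall>f \<in> space Efield. F (shift h f) = F f)"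

text \<open>Brown--Resnick stationarity of a non-negative random field Z on M with
  finite positive means.\<close>
definition BRs :: "'a measure \<Rightarrow> ('a \<Rightarrow> (int ^ 'd) \<Rightarrow> real) \<Rightarrow> bool" where
  "BRs M Z \<longleftrightarrow> prob_space M \<and> Z \<in> M \<rightarrow>\<^sub>M Efield \<and>
     (\<forall>t. 0 < (\<integral>\<^sup>+\<omega>. ennreal (Z \<omega> t) \<partial>M) \<and> (\<integral>\<^sup>+\<omega>. ennreal (Z \<omega> t) \<partial>M) < \<infinity>) \<and>
     (\<forall>h. \<forall>G :: ((int ^ 'd) \<Rightarrow> real) \<Rightarrow> ennreal.
        G \<in> borel_measurable Efield \<and> zero_homogeneous G \<longrightarrow>
        (\<integral>\<^sup>+\<omega>. ennreal (Z \<omega> h) * G (Z \<omega>) \<partial>M) =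
        (\<integral>\<^sup>+\<omega>. ennreal (Z \<omega> 0) * G (shift h (Z \<omega>)) \<partial>M))"

end

theory Submission
  imports Defs
begin

lemma space_Efield: "f \<in> space Efield \<longleftrightarrow> (\<forall>t. 0 \<le> f t)"
  by (auto simp: Efield_def space_PiM PiE_def Pi_def)

lemma comp_meas:
  assumes "Z \<in> M \<rightarrow>\<^sub>M Efield"
  shows "(\<lambda>\<omega>. Z \<omega> t) \<in> borel_measurable M"
proof -
  have "(\<lambda>\<omega>. Z \<omega> t) \<in> M \<rightarrow>\<^sub>M restrict_space borel {0..}"
  proof -
    have "(\<lambda>f. f t) \<in> Efield \<rightarrow>\<^sub>M restrict_space borel {0..}"
      unfolding Efield_def by (rule measurable_component_singleton) simp
    thus ?thesis using measurable_compose[OF assms] by blast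
  qed
  thus ?thesis by (simp add: measurable_restrict_space2_iff)
qed

lemma key:
  fixes M :: "'a measure" and Z :: "'a \<Rightarrow> (int ^ 'd) \<Rightarrow> real"
    and N :: "'b measure" and \<Theta> :: "'b \<Rightarrow> (int ^ 'd) \<Rightarrow> real"
    and F :: "((int ^ 'd) \<Rightarrow> real) \<Rightarrow> ennreal"
  assumes BR: "BRs M Z"
    and \<Theta>_meas: "\<Theta> \<in> N \<rightarrow>\<^sub>M Efield"
    and \<Theta>_law: "\<And>A. A \<in> sets Efield \<Longrightarrow>
        emeasure N (\<Theta> -` A \<inter> space N) =
        (\<integral>\<^sup>+\<omega>. ennreal (Z \<omega> 0) * indicator A (\<lambda>t. Z \<omega> t / Z \<omega> 0) \<partial>M)"
    and F_meas: "F \<in> borel_measurable Efield"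
    and F_shift: "shift_invariant F" and F_hom: "zero_homogeneous F"
  shows "(\<integral>\<^sup>+x. F (\<Theta> x) \<partial>N) = (\<integral>\<^sup>+\<omega>. ennreal (Z \<omega> h) * F (Z \<omega>) \<partial>M)"
proof -
  have Zm: "Z \<in> M \<rightarrow>\<^sub>M Efield" using BR by (simp add: BRs_def)
  have BRc: "\<forall>h. \<forall>G :: ((int ^ 'd) \<Rightarrow> real) \<Rightarrow> ennreal.
        G \<in> borel_measurable Efield \<and> zero_homogeneous G \<longrightarrow>
        (\<integral>\<^sup>+\<omega>. ennreal (Z \<omega> h) * G (Z \<omega>) \<partial>M) =
        (\<integral>\<^sup>+\<omega>. ennreal (Z \<omega> 0) * G (shift h (Z \<omega>)) \<partial>M)"
    using BR unfolding BRs_def by blast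
  have Zsp: "\<And>\<omega> t. \<omega> \<in> space M \<Longrightarrow> 0 \<le> Z \<omega> t"
    using measurable_space[OF Zm] space_Efield by blast
  define g where "g = (\<lambda>\<omega> t. Z \<omega> t / Z \<omega> 0)"
  have gm: "g \<in> M \<rightarrow>\<^sub>M Efield"
    unfolding Efield_def g_def
  proof (rule measurable_PiM_single')
    fix t :: "int ^ 'd"
    show "(\<lambda>\<omega>. Z \<omega> t / Z \<omega> 0) \<in> M \<rightarrow>\<^sub>M restrict_space borel {0..}"
      using comp_meas[OF Zm] Zsp by (auto intro!: measurable_restrict_space2)
  next
    show "(\<lambda>\<omega> t. Z \<omega> t / Z \<omega> 0) \<in> space M \<rightarrow> (\<Pi>\<^sub>E t\<in>UNIV. space (restrict_space borel {0..}))"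
      using Zsp by auto
  qed
  have Z0m: "(\<lambda>\<omega>. ennreal (Z \<omega> 0)) \<in> borel_measurable M"
    using comp_meas[OF Zm] by measurable
  define Q where "Q = distr (density M (\<lambda>\<omega>. ennreal (Z \<omega> 0))) Efield g"
  have gm': "g \<in> density M (\<lambda>\<omega>. ennreal (Z \<omega> 0)) \<rightarrow>\<^sub>M Efield"
    by (subst measurable_cong_sets[OF sets_density refl]) (rule gm)
  have eq: "distr N Efield \<Theta> = Q"
  proof (rule measure_eqI)
    show "sets (distr N Efield \<Theta>) = sets Q" by (simp add: Q_def)
  next
    fix A assume "A \<in> sets (distr N Efield \<Theta>)"
    hence A: "A \<in> sets Efield" by simp
    have mA: "g -` A \<inter> space M \<in> sets M" using measurable_sets[OF gm A] .
    have "emeasure Q A = emeasure (density M (\<lambda>\<omega>. ennreal (Z \<omega> 0))) (g -` A \<inter> space M)"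
      unfolding Q_def using emeasure_distr[OF gm' A] by simp
    also have "\<dots> = (\<integral>\<^sup>+\<omega>. ennreal (Z \<omega> 0) * indicator (g -` A \<inter> space M) \<omega> \<partial>M)"
      using emeasure_density[OF Z0m mA] .
    also have "\<dots> = (\<integral>\<^sup>+\<omega>. ennreal (Z \<omega> 0) * indicator A (\<lambda>t. Z \<omega> t / Z \<omega> 0) \<partial>M)"
      by (rule nn_integral_cong) (auto simp: g_def indicator_def)
    finally show "emeasure (distr N Efield \<Theta>) A = emeasure Q A"
      using \<Theta>_law[OF A] emeasure_distr[OF \<Theta>_meas A] by simp
  qed
  have "(\<integral>\<^sup>+x. F (\<Theta> x) \<partial>N) = integral\<^sup>N (distr N Efield \<Theta>) F"
    using nn_integral_distr[OF \<Theta>_meas] F_meas by simp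
  also have "\<dots> = integral\<^sup>N Q F" using eq by simp
  also have "\<dots> = (\<integral>\<^sup>+\<omega>. F (g \<omega>) \<partial>density M (\<lambda>\<omega>. ennreal (Z \<omega> 0)))"
    unfolding Q_def using nn_integral_distr[OF gm'] F_meas by simp
  also have "\<dots> = (\<integral>\<^sup>+\<omega>. ennreal (Z \<omega> 0) * F (g \<omega>) \<partial>M)"
    by (rule nn_integral_density[OF Z0m]) (rule measurable_compose[OF gm F_meas])
  also have "\<dots> = (\<integral>\<^sup>+\<omega>. ennreal (Z \<omega> 0) * F (Z \<omega>) \<partial>M)"
  proof (rule nn_integral_cong)
    fix \<omega> assume \<omega>: "\<omega> \<in> space M"
    show "ennreal (Z \<omega> 0) * F (g \<omega>) = ennreal (Z \<omega> 0) * F (Z \<omega>)"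
    proof (cases "Z \<omega> 0 = 0")
      case False
      hence pos: "1 / Z \<omega> 0 > 0" using Zsp[OF \<omega>, of 0] by simp
      have sp: "Z \<omega> \<in> space Efield" using measurable_space[OF Zm \<omega>] .
      have "g \<omega> = (\<lambda>t. (1 / Z \<omega> 0) * Z \<omega> t)" by (simp add: g_def)
      moreover have "F (\<lambda>t. (1 / Z \<omega> 0) * Z \<omega> t) = F (Z \<omega>)"
        using F_hom pos sp unfolding zero_homogeneous_def by blast
      ultimately have "F (g \<omega>) = F (Z \<omega>)" by simp
      thus ?thesis by simp
    qed simp
  qed
  also have "\<dots> = (\<integral>\<^sup>+\<omega>. ennreal (Z \<omega> 0) * F (shift h (Z \<omega>)) \<partial>M)"
  proof (rule nn_integral_cong)
    fix \<omega> assume \<omega>: "\<omega> \<in> space M"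
    have sp: "Z \<omega> \<in> space Efield" using measurable_space[OF Zm \<omega>] .
    show "ennreal (Z \<omega> 0) * F (Z \<omega>) = ennreal (Z \<omega> 0) * F (shift h (Z \<omega>))"
      using F_shift sp unfolding shift_invariant_def by simp
  qed
  also have "\<dots> = (\<integral>\<^sup>+\<omega>. ennreal (Z \<omega> h) * F (Z \<omega>) \<partial>M)"
    using BRc[rule_format, OF conjI[OF F_meas F_hom]] by simp
  finally show ?thesis .
qed

lemma part1:
  fixes M :: "'a measure" and Z :: "'a \<Rightarrow> (int ^ 'd) \<Rightarrow> real"
    and N :: "'b measure" and \<Theta> :: "'b \<Rightarrow> (int ^ 'd) \<Rightarrow> real"
    and F :: "((int ^ 'd) \<Rightarrow> real) \<Rightarrow> ennreal"
  assumes BR: "BRs M Z"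
    and sup_pos: "AE \<omega> in M. \<exists>t. Z \<omega> t > 0"
    and \<Theta>_meas: "\<Theta> \<in> N \<rightarrow>\<^sub>M Efield"
    and \<Theta>_law: "\<And>A. A \<in> sets Efield \<Longrightarrow>
        emeasure N (\<Theta> -` A \<inter> space N) =
        (\<integral>\<^sup>+\<omega>. ennreal (Z \<omega> 0) * indicator A (\<lambda>t. Z \<omega> t / Z \<omega> 0) \<partial>M)"
    and F_meas: "F \<in> borel_measurable Efield"
    and F_shift: "shift_invariant F" and F_hom: "zero_homogeneous F"
  shows "(\<integral>\<^sup>+\<omega>. F (Z \<omega>) \<partial>M) = 0 \<longleftrightarrow> (\<integral>\<^sup>+x. F (\<Theta> x) \<partial>N) = 0"
proof -
  have Zm: "Z \<in> M \<rightarrow>\<^sub>M Efield" using BR by (simp add: BRs_def)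
  have FZm: "(\<lambda>\<omega>. F (Z \<omega>)) \<in> borel_measurable M"
    by (rule measurable_compose[OF Zm F_meas])
  have prm: "\<And>h. (\<lambda>\<omega>. ennreal (Z \<omega> h) * F (Z \<omega>)) \<in> borel_measurable M"
    using comp_meas[OF Zm] FZm by measurable
  have K: "\<And>h. (\<integral>\<^sup>+x. F (\<Theta> x) \<partial>N) = (\<integral>\<^sup>+\<omega>. ennreal (Z \<omega> h) * F (Z \<omega>) \<partial>M)"
    by (rule key[OF BR \<Theta>_meas \<Theta>_law F_meas F_shift F_hom])
  show ?thesis
  proof
    assume "(\<integral>\<^sup>+\<omega>. F (Z \<omega>) \<partial>M) = 0"
    hence "AE \<omega> in M. F (Z \<omega>) = 0" using nn_integral_0_iff_AE[OF FZm] by simp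
    hence "AE \<omega> in M. ennreal (Z \<omega> 0) * F (Z \<omega>) = 0" by eventually_elim simp
    hence "(\<integral>\<^sup>+\<omega>. ennreal (Z \<omega> 0) * F (Z \<omega>) \<partial>M) = 0"
      using nn_integral_0_iff_AE[OF prm] by simp
    thus "(\<integral>\<^sup>+x. F (\<Theta> x) \<partial>N) = 0" using K by simp
  next
    assume "(\<integral>\<^sup>+x. F (\<Theta> x) \<partial>N) = 0"
    hence "\<And>h. AE \<omega> in M. ennreal (Z \<omega> h) * F (Z \<omega>) = 0"
      using K nn_integral_0_iff_AE[OF prm] by metis
    hence "AE \<omega> in M. \<forall>h\<in>UNIV. ennreal (Z \<omega> h) * F (Z \<omega>) = 0"
      by (intro AE_ball_countable') auto
    hence "AE \<omega> in M. F (Z \<omega>) = 0"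
      using sup_pos by eventually_elim (auto simp: ennreal_eq_0_iff; meson not_le)
    thus "(\<integral>\<^sup>+\<omega>. F (Z \<omega>) \<partial>M) = 0" using nn_integral_0_iff_AE[OF FZm] by simp
  qed
qed

theorem lemmaA2:
  fixes M :: "'a measure" and Z :: "'a \<Rightarrow> (int ^ 'd) \<Rightarrow> real"
    and N :: "'b measure" and \<Theta> :: "'b \<Rightarrow> (int ^ 'd) \<Rightarrow> real"
    and F :: "((int ^ 'd) \<Rightarrow> real) \<Rightarrow> ennreal"
  assumes BR: "BRs M Z"
    and sup_pos: "AE \<omega> in M. \<exists>t. Z \<omega> t > 0"
    and mean1: "\<And>t. (\<integral>\<^sup>+\<omega>. ennreal (Z \<omega> t) \<partial>M) = 1"
    and N: "prob_space N" and \<Theta>_meas: "\<Theta> \<in> N \<rightarrow>\<^sub>M Efield"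
    and \<Theta>_law: "\<And>A. A \<in> sets Efield \<Longrightarrow>
        emeasure N (\<Theta> -` A \<inter> space N) =
        (\<integral>\<^sup>+\<omega>. ennreal (Z \<omega> 0) * indicator A (\<lambda>t. Z \<omega> t / Z \<omega> 0) \<partial>M)"
    and F_meas: "F \<in> borel_measurable Efield"
    and F_shift: "shift_invariant F" and F_hom: "zero_homogeneous F"
  shows "((\<integral>\<^sup>+\<omega>. F (Z \<omega>) \<partial>M) = 0 \<longleftrightarrow> (\<integral>\<^sup>+x. F (\<Theta> x) \<partial>N) = 0)
       \<and> ((\<forall>f \<in> space Efield. F f \<le> 1) \<longrightarrow>
           ((\<integral>\<^sup>+\<omega>. F (Z \<omega>) \<partial>M) = 1 \<longleftrightarrow> (\<integral>\<^sup>+x. F (\<Theta> x) \<partial>N) = 1))"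
proof (intro conjI impI)
  show "(\<integral>\<^sup>+\<omega>. F (Z \<omega>) \<partial>M) = 0 \<longleftrightarrow> (\<integral>\<^sup>+x. F (\<Theta> x) \<partial>N) = 0"
    by (rule part1[OF BR sup_pos \<Theta>_meas \<Theta>_law F_meas F_shift F_hom])
next
  assume le1: "\<forall>f \<in> space Efield. F f \<le> 1"
  have Zm: "Z \<in> M \<rightarrow>\<^sub>M Efield" using BR by (simp add: BRs_def)
  have PM: "prob_space M" using BR by (simp add: BRs_def)
  define G where "G = (\<lambda>f. 1 - F f)"
  have G_meas: "G \<in> borel_measurable Efield" unfolding G_def using F_meas by measurable
  have G_shift: "shift_invariant G" using F_shift unfolding shift_invariant_def G_def by simp
  have G_hom: "zero_homogeneous G" using F_hom unfolding zero_homogeneous_def G_def by simp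
  have P1: "(\<integral>\<^sup>+\<omega>. G (Z \<omega>) \<partial>M) = 0 \<longleftrightarrow> (\<integral>\<^sup>+x. G (\<Theta> x) \<partial>N) = 0"
    by (rule part1[OF BR sup_pos \<Theta>_meas \<Theta>_law G_meas G_shift G_hom])
  have gen: "(\<integral>\<^sup>+x. G (X x) \<partial>L) = 0 \<longleftrightarrow> (\<integral>\<^sup>+x. F (X x) \<partial>L) = 1"
    if L: "prob_space L" and X: "X \<in> L \<rightarrow>\<^sub>M Efield" for L :: "'c measure" and X
  proof -
    have FX: "(\<lambda>x. F (X x)) \<in> borel_measurable L" by (rule measurable_compose[OF X F_meas])
    have le: "\<And>x. x \<in> space L \<Longrightarrow> F (X x) \<le> 1" using le1 measurable_space[OF X] by blast
    have I1: "(\<integral>\<^sup>+x. 1 \<partial>L) = 1" using L prob_space.emeasure_space_1 by simp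
    have Ile: "(\<integral>\<^sup>+x. F (X x) \<partial>L) \<le> 1"
      using nn_integral_mono[of L "\<lambda>x. F (X x)" "\<lambda>x. 1"] le I1 by simp
    have "(\<integral>\<^sup>+x. G (X x) \<partial>L) = (\<integral>\<^sup>+x. 1 \<partial>L) - (\<integral>\<^sup>+x. F (X x) \<partial>L)"
      unfolding G_def
    proof (rule nn_integral_diff)
      show "integral\<^sup>N L (\<lambda>x. F (X x)) \<noteq> \<infinity>"
        using le_less_trans[OF Ile ennreal_one_less_top] by simp
    next
      show "(\<lambda>x. 1) \<in> borel_measurable L" by simp
    next
      show "(\<lambda>x. F (X x)) \<in> borel_measurable L" by (rule FX)
    next
      show "AE x in L. F (X x) \<le> 1" by (rule AE_I2) (rule le)
    qed
    also have "\<dots> = 1 - (\<integral>\<^sup>+x. F (X x) \<partial>L)" using I1 by simp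
    finally have eqG: "(\<integral>\<^sup>+x. G (X x) \<partial>L) = 1 - (\<integral>\<^sup>+x. F (X x) \<partial>L)" .
    have "(1 - (\<integral>\<^sup>+x. F (X x) \<partial>L) = 0) \<longleftrightarrow> (1::ennreal) \<le> (\<integral>\<^sup>+x. F (X x) \<partial>L)"
      by (simp add: diff_eq_0_iff_ennreal)
    also have "\<dots> \<longleftrightarrow> (\<integral>\<^sup>+x. F (X x) \<partial>L) = 1"
      using Ile by (auto intro: antisym)
    finally show ?thesis using eqG by simp
  qed
  show "(\<integral>\<^sup>+\<omega>. F (Z \<omega>) \<partial>M) = 1 \<longleftrightarrow> (\<integral>\<^sup>+x. F (\<Theta> x) \<partial>N) = 1"
    using P1 gen[OF PM Zm] gen[OF N \<Theta>_meas] by simp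
qed

end
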